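(* Let $\nu\in\mathbb{N}$, let $(X,d)$ be a $\nu$-generalized metric space, and let $\{x_n\}_{n\in\mathbb{N}}$ be a sequence in $X$ whose terms are pairwise distinct. Suppose that for every $\epsilon>0$ and for any two subsequences $\{x_{p_i}\}$ and $\{x_{q_i}\}$ of $\{x_n\}$, if $\limsup_{i\to\infty} d(x_{p_i},x_{q_i})\le\epsilon$, then there is $N$ such that $d(x_{p_i+1},x_{q_i+1})\le\epsilon$ for all $i\ge N$. If $d(x_n,x_{n+1})\to0$ and $d(x_n,x_{n+2})\to0$ as $n\to\infty$, then $\{x_n\}$ is Cauchy.
   Context: Let $X$ be a nonempty set, $d:X\times X\to[0,\infty)$, and $\nu\in\mathbb{N}$. $(X,d)$ is a $\nu$-generalized metric space if: (1) $d(x,y)=0$ iff $x=y$; (2) $d(x,y)=d(y,x)$ for all $x,y$; (3) $d(x,y)\le d(x,u_1)+d(u_1,u_2)+\dots+d(u_\nu,y)$ for every set $\{x,u_1,\dots,u_\nu,y\}$ of $\nu+2$ pairwise distinct elements of $X$. For $k\in\mathbb{N}$, a sequence $\{x_n\}$ in $X$ is $k$-Cauchy if $\lim_{n\to\infty}\sup\{d(x_n,x_{n+1+mk}): m\in\mathbb{Z}^+\}=0$, where $\mathbb{Z}^+$ denotes the nonnegative integers; it is Cauchy if it is $1$-Cauchy. A subsequence $\{x_{p_i}\}$ means $p_1<p_2<\cdots$ in $\mathbb{N}$. *)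

theory Defs
  imports "HOL-Analysis.Analysis"
begin

definition path_len :: "('a \<Rightarrow> 'a \<Rightarrow> real) \<Rightarrow> 'a \<Rightarrow> 'a list \<Rightarrow> 'a \<Rightarrow> real" where
  "path_len d x us y = sum_list (map2 d (x # us) (us @ [y]))"

definition gen_metric :: "nat \<Rightarrow> 'a set \<Rightarrow> ('a \<Rightarrow> 'a \<Rightarrow> real) \<Rightarrow> bool" where
  "gen_metric \<nu> X d \<longleftrightarrow> \<nu> \<ge> 1 \<and> X \<noteq> {} \<and>
     (\<forall>x\<in>X. \<forall>y\<in>X. d x y \<ge> 0) \<and>
     (\<forall>x\<in>X. \<forall>y\<in>X. d x y = 0 \<longleftrightarrow> x = y) \<and>
     (\<forall>x\<in>X. \<forall>y\<in>X. d x y = d y x) \<and>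
     (\<forall>x\<in>X. \<forall>y\<in>X. \<forall>us. set us \<subseteq> X \<and> length us = \<nu> \<and> distinct (x # us @ [y])
        \<longrightarrow> d x y \<le> path_len d x us y)"

definition k_cauchy :: "('a \<Rightarrow> 'a \<Rightarrow> real) \<Rightarrow> nat \<Rightarrow> (nat \<Rightarrow> 'a) \<Rightarrow> bool" where
  "k_cauchy d k x \<longleftrightarrow>
     ((\<lambda>n. SUP m. ereal (d (x n) (x (n + 1 + m * k)))) \<longlongrightarrow> 0) sequentially"

definition gm_cauchy :: "('a \<Rightarrow> 'a \<Rightarrow> real) \<Rightarrow> (nat \<Rightarrow> 'a) \<Rightarrow> bool" where
  "gm_cauchy d x \<longleftrightarrow> k_cauchy d 1 x"

end

theory Submission imports Defs begin

lemma path_len_Cons: "path_len d a (u # us) b = d a u + path_len d u us b"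
  by (simp add: path_len_def)

lemma path_len_Nil: "path_len d a [] b = d a b"
  by (simp add: path_len_def)

lemma path_len_snoc: "path_len d a (us @ [u]) b = path_len d a us u + d u b"
  by (induction us arbitrary: a) (simp_all add: path_len_Cons path_len_Nil)

lemma path_len_bound:
  "successively (\<lambda>u v. d u v \<le> (\<eta>::real)) (a # us @ [b]) \<Longrightarrow> path_len d a us b \<le> (real (length us) + 1) * \<eta>"
proof (induction us arbitrary: a)
  case Nil thus ?case by (simp add: path_len_Nil)
next
  case (Cons u us)
  from Cons.prems have 1: "d a u \<le> \<eta>" and 2: "successively (\<lambda>u v. d u v \<le> \<eta>) (u # us @ [b])"
    by auto
  have "path_len d u us b \<le> (real (length us) + 1) * \<eta>" using Cons.IH[OF 2] .
  thus ?case using 1 by (simp add: path_len_Cons algebra_simps)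
qed

fun zz :: "nat \<Rightarrow> nat list" where
  "zz 0 = []"
| "zz (Suc 0) = [2]"
| "zz (Suc (Suc t)) = 2 # map (\<lambda>i. i + 2) (zz t) @ [3]"

lemma zz_length: "length (zz t) = t"
  by (induction t rule: zz.induct) auto

lemma zz_set: "set (zz t) = {2..t+1}"
proof (induction t rule: zz.induct)
  case (3 t)
  have "set (zz (Suc (Suc t))) = {2} \<union> (\<lambda>i. i+2) ` {2..t+1} \<union> {3}"
    using 3 by auto
  also have "(\<lambda>i. i+2) ` {2..t+1} = {4..t+3}"
  proof
    show "{4..t+3} \<subseteq> (\<lambda>i. i+2) ` {2..t+1}"
    proof
      fix y assume "y \<in> {4..t+3}"
      thus "y \<in> (\<lambda>i. i+2) ` {2..t+1}" by (intro image_eqI[where x="y-2"]) auto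
    qed
  qed auto
  finally show ?case by auto
qed auto

lemma zz_distinct: "distinct (zz t)"
proof (induction t rule: zz.induct)
  case (3 t)
  thus ?case using zz_set[of t] by (auto simp: distinct_map inj_on_def)
qed auto

definition R2 :: "nat \<Rightarrow> nat \<Rightarrow> bool" where
  "R2 i j \<longleftrightarrow> i \<noteq> j \<and> i \<le> j + 2 \<and> j \<le> i + 2"

lemma zz_chain: "successively R2 (0 # zz t @ [1])"
proof (induction t rule: zz.induct)
  case 1 thus ?case by (simp add: R2_def)
next
  case 2 thus ?case by (simp add: R2_def)
next
  case (3 t)
  have m: "successively R2 (map (\<lambda>i. i+2) (0 # zz t @ [1]))"
    using 3 by (simp only: successively_map) (auto simp: R2_def elim!: successively_mono)
  have eq: "0 # zz (Suc (Suc t)) @ [1] = [0] @ map (\<lambda>i. i+2) (0 # zz t @ [1]) @ [1]"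
    by simp
  show ?case unfolding eq using m
    by (simp only: successively_append_iff) (auto simp: R2_def)
qed

lemma gm_ineq:
  assumes gm: "gen_metric \<nu> X d" and xX: "\<And>n. x n \<in> X" and inj: "inj x"
    and dist: "distinct (a # is @ [b])" and len: "length is = \<nu>"
  shows "d (x a) (x b) \<le> path_len d (x a) (map x is) (x b)"
proof -
  have "inj_on x (set (a # is @ [b]))" using inj by (rule inj_on_subset) simp
  hence "distinct (map x (a # is @ [b]))" using dist by (simp only: distinct_map)
  hence "distinct (x a # map x is @ [x b])" by simp
  moreover have "set (map x is) \<subseteq> X" using xX by auto
  ultimately show ?thesis using gm len xX unfolding gen_metric_def by auto
qed

lemma gm_path:
  assumes gm: "gen_metric \<nu> X d" and xX: "\<And>n. x n \<in> X" and inj: "inj x"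
    and dist: "distinct (a # is @ [b])" and len: "length is = \<nu>"
    and succ: "successively (\<lambda>i j. d (x i) (x j) \<le> \<eta>) (a # is @ [b])"
  shows "d (x a) (x b) \<le> (real \<nu> + 1) * \<eta>"
proof -
  have "successively (\<lambda>u v. d u v \<le> \<eta>) (map x (a # is @ [b]))"
    using succ by (simp only: successively_map)
  hence "successively (\<lambda>u v. d u v \<le> \<eta>) (x a # map x is @ [x b])" by simp
  from path_len_bound[OF this] len gm_ineq[OF gm xX inj dist len] show ?thesis by simp
qed

lemma successively_upt: "successively (\<lambda>i j. j = Suc i) [a..<b]"
proof (induction b)
  case (Suc b)
  thus ?case by (cases "a < b"; cases "a = b") (auto simp: successively_append_iff)
qed simp

lemma fixed_gap:
  assumes gm: "gen_metric \<nu> X d" and xX: "\<And>n. x n \<in> X" and inj: "inj x"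
    and l1: "(\<lambda>n. d (x n) (x (n + 1))) \<longlonglongrightarrow> 0"
    and l2: "(\<lambda>n. d (x n) (x (n + 2))) \<longlonglongrightarrow> 0"
  shows "1 \<le> k \<Longrightarrow> (\<lambda>n. d (x n) (x (n + k))) \<longlonglongrightarrow> 0"
proof (induction k rule: less_induct)
  case (less k)
  have pos: "\<And>n m. 0 \<le> d (x n) (x m)" using gm xX unfolding gen_metric_def by auto
  have sym: "\<And>n m. d (x n) (x m) = d (x m) (x n)" using gm xX unfolding gen_metric_def by auto
  have nu1: "\<nu> \<ge> 1" using gm unfolding gen_metric_def by auto
  show ?case
  proof (cases "k \<le> 2")
    case True
    then have "k = 1 \<or> k = 2" using less.prems by auto
    thus ?thesis using l1 l2 by auto
  next
    case False
    hence k3: "k \<ge> 3" by simp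
    have IH: "\<And>h. h \<in> {1..k-1} \<Longrightarrow> (\<lambda>n. d (x n) (x (n+h))) \<longlonglongrightarrow> 0"
      using less.IH by auto
    have main: "eventually (\<lambda>n. d (x n) (x (n+k)) \<le> (real \<nu> + 1) * \<eta>) sequentially"
      if "\<eta> > 0" for \<eta>
    proof -
      have "eventually (\<lambda>n. \<forall>h\<in>{1..k-1}. d (x n) (x (n+h)) < \<eta>) sequentially"
        by (rule eventually_ball_finite) (auto intro!: order_tendstoD(2)[OF IH that])
      then obtain N where N0: "\<forall>m\<ge>N. \<forall>h\<in>{1..k-1}. d (x m) (x (m+h)) < \<eta>"
        by (auto simp: eventually_sequentially)
      have N: "\<And>m h. m \<ge> N \<Longrightarrow> h \<in> {1..k-1} \<Longrightarrow> d (x m) (x (m+h)) < \<eta>"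
        using N0 by blast
      have C: "d (x i) (x j) \<le> \<eta>"
        if "N \<le> i" "N \<le> j" "i \<noteq> j" "i \<le> j + (k-1)" "j \<le> i + (k-1)" for i j
      proof (cases "i < j")
        case True
        have "j - i \<in> {1..k-1}" using True that by auto
        then have "d (x i) (x (i + (j-i))) < \<eta>" using N[of i "j-i"] that by blast
        thus ?thesis using True by simp
      next
        case False
        have "i - j \<in> {1..k-1}" using False that by auto
        then have "d (x j) (x (j + (i-j))) < \<eta>" using N[of j "i-j"] that by blast
        thus ?thesis using False sym[of i j] by simp
      qed
      define G where "G i j \<longleftrightarrow> i \<noteq> j \<and> i \<le> j + (k-1) \<and> j \<le> i + (k-1)" for i j
      have succ: "successively (\<lambda>i j. d (x i) (x j) \<le> \<eta>) L"
        if "successively G L" "\<forall>i\<in>set L. N \<le> i" for L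
        using that(1) by (rule successively_mono) (use that(2) C in \<open>auto simp: G_def\<close>)
      have upG: "successively G [a..<b]" for a b
        using successively_upt[of a b] by (rule successively_mono) (use k3 in \<open>auto simp: G_def\<close>)
      show ?thesis
      proof (rule eventually_sequentiallyI[of N])
        fix n assume n: "N \<le> n"
        show "d (x n) (x (n+k)) \<le> (real \<nu> + 1) * \<eta>"
        proof (cases "k \<ge> \<nu> + 1")
          case True
          let ?is = "[n+1..<n+\<nu>+1]"
          have L: "n # ?is @ [n+k] = [n..<n+\<nu>+1] @ [n+k]" by (simp add: upt_rec)
          have "successively G ([n..<n+\<nu>+1] @ [n+k])"
            using upG[of n "n+\<nu>+1"] True nu1 by (auto simp: successively_append_iff G_def)
          hence s: "successively (\<lambda>i j. d (x i) (x j) \<le> \<eta>) (n # ?is @ [n+k])"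
            unfolding L using n by (intro succ) auto
          have dist: "distinct (n # ?is @ [n+k])" using True by auto
          show ?thesis by (rule gm_path[OF gm xX inj dist _ s]) simp
        next
          case False
          define t where "t = \<nu> - (k-1)"
          let ?z = "map (\<lambda>i. i + (n+k-1)) (zz t)"
          let ?is = "[n+1..<n+k] @ ?z"
          have u: "[n..<n+k] = [n..<n+k-1] @ [n+k-1]"
            using k3 upt_Suc_append[of n "n+k-1"] by simp
          have L: "n # ?is @ [n+k] = [n..<n+k-1] @ map (\<lambda>i. i + (n+k-1)) (0 # zz t @ [1])"
          proof -
            have "n # ?is @ [n+k] = [n..<n+k] @ ?z @ [n+k]" using k3 by (simp add: upt_rec)
            also have "\<dots> = [n..<n+k-1] @ map (\<lambda>i. i + (n+k-1)) (0 # zz t @ [1])"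
              unfolding u using k3 by simp
            finally show ?thesis .
          qed
          have zG: "successively G (map (\<lambda>i. i + (n+k-1)) (0 # zz t @ [1]))"
            unfolding successively_map using zz_chain[of t]
            by (rule successively_mono) (use k3 in \<open>auto simp: G_def R2_def\<close>)
          have "successively G ([n..<n+k-1] @ map (\<lambda>i. i + (n+k-1)) (0 # zz t @ [1]))"
            using upG[of n "n+k-1"] zG k3 by (auto simp: successively_append_iff G_def)
          hence s: "successively (\<lambda>i j. d (x i) (x j) \<le> \<eta>) (n # ?is @ [n+k])"
            unfolding L using n k3 by (intro succ) auto
          have dist: "distinct (n # ?is @ [n+k])"
            using zz_set[of t] zz_distinct[of t] k3 by (auto simp: distinct_map inj_on_def)
          have len: "length ?is = \<nu>" using False k3 by (simp add: zz_length t_def)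
          show ?thesis by (rule gm_path[OF gm xX inj dist len s])
        qed
      qed
    qed
    show ?thesis
    proof (rule LIMSEQ_I)
      fix r :: real assume r: "0 < r"
      have "r / (2 * (real \<nu> + 1)) > 0" using r by simp
      from main[OF this] obtain no where no: "\<And>n. n \<ge> no \<Longrightarrow>
          d (x n) (x (n+k)) \<le> (real \<nu> + 1) * (r / (2 * (real \<nu> + 1)))"
        by (auto simp: eventually_sequentially)
      have "(real \<nu> + 1) * (r / (2 * (real \<nu> + 1))) = r / 2" by (simp add: field_simps)
      have "\<forall>n\<ge>no. norm (d (x n) (x (n+k)) - 0) < r"
      proof (intro allI impI)
        fix n assume "n \<ge> no"
        hence "d (x n) (x (n+k)) \<le> r / 2" using no \<open>_ = r / 2\<close> by metis
        thus "norm (d (x n) (x (n+k)) - 0) < r" using pos[of n "n+k"] r by simp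
      qed
      thus "\<exists>no. \<forall>n\<ge>no. norm (d (x n) (x (n+k)) - 0) < r" by blast
    qed
  qed
qed

lemma successively_all: "(\<forall>u\<in>set L. \<forall>v\<in>set L. P u v) \<Longrightarrow> successively P L"
  by (induction L rule: induct_list012) auto

theorem theorem2p2:
  fixes \<nu> :: nat and X :: "'a set" and d :: "'a \<Rightarrow> 'a \<Rightarrow> real" and x :: "nat \<Rightarrow> 'a"
  assumes "gen_metric \<nu> X d"
    and "\<And>n. x n \<in> X"
    and "inj x"
    and "\<And>\<epsilon> p q. \<epsilon> > 0 \<Longrightarrow> strict_mono p \<Longrightarrow> strict_mono q \<Longrightarrow>
           limsup (\<lambda>i. ereal (d (x (p i)) (x (q i)))) \<le> ereal \<epsilon> \<Longrightarrow>
           \<exists>N. \<forall>i\<ge>N. d (x (p i + 1)) (x (q i + 1)) \<le> \<epsilon>"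
    and "(\<lambda>n. d (x n) (x (n + 1))) \<longlonglongrightarrow> 0"
    and "(\<lambda>n. d (x n) (x (n + 2))) \<longlonglongrightarrow> 0"
  shows "gm_cauchy d x"
proof -
  note gm = assms(1) and xX = assms(2) and inj = assms(3) and hyp = assms(4)
  have pos: "\<And>n m. 0 \<le> d (x n) (x m)" using gm xX unfolding gen_metric_def by auto
  have sym: "\<And>n m. d (x n) (x m) = d (x m) (x n)" using gm xX unfolding gen_metric_def by auto
  have zero: "\<And>n. d (x n) (x n) = 0" using gm xX unfolding gen_metric_def by auto
  have nu1: "\<nu> \<ge> 1" using gm unfolding gen_metric_def by auto
  have F: "\<And>k. 1 \<le> k \<Longrightarrow> (\<lambda>n. d (x n) (x (n + k))) \<longlonglongrightarrow> 0"
    using fixed_gap[OF gm xX inj assms(5,6)] by blast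
  have Wd: "\<exists>N. \<forall>n\<ge>N. \<forall>i j. n \<le> i \<longrightarrow> i \<le> n + L \<longrightarrow> n \<le> j \<longrightarrow> j \<le> n + L \<longrightarrow> d (x i) (x j) \<le> \<eta>"
    if "\<eta> > 0" for \<eta> L
  proof -
    have "eventually (\<lambda>n. \<forall>h\<in>{1..L}. d (x n) (x (n+h)) < \<eta>) sequentially"
      by (rule eventually_ball_finite) (auto intro!: order_tendstoD(2)[OF F that])
    then obtain N where N0: "\<forall>m\<ge>N. \<forall>h\<in>{1..L}. d (x m) (x (m+h)) < \<eta>"
      by (auto simp: eventually_sequentially)
    have C: "d (x i) (x j) \<le> \<eta>" if "N \<le> i" "N \<le> j" "i \<le> j + L" "j \<le> i + L" for i j
    proof (cases "i < j")
      case True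
      have "j - i \<in> {1..L}" using True that by auto
      then have "d (x i) (x (i + (j-i))) < \<eta>" using N0 that by blast
      thus ?thesis using True by simp
    next
      case False
      show ?thesis
      proof (cases "i = j")
        case True thus ?thesis using zero \<open>\<eta> > 0\<close> by simp
      next
        case False2: False
        have "i - j \<in> {1..L}" using False False2 that by auto
        then have "d (x j) (x (j + (i-j))) < \<eta>" using N0 that by blast
        thus ?thesis using False sym[of i j] by simp
      qed
    qed
    show ?thesis by (rule exI[of _ N]) (auto intro!: C)
  qed
  have key: "eventually (\<lambda>n. \<forall>m>n. d (x n) (x m) \<le> \<epsilon>) sequentially" if "\<epsilon> > 0" for \<epsilon>
  proof (rule ccontr)
    assume "\<not> ?thesis"
    hence H: "\<forall>N. \<exists>n\<ge>N. \<exists>m>n. \<epsilon> < d (x n) (x m)"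
      by (auto simp: eventually_sequentially not_le)
    define \<eta> where "\<eta> i = min \<epsilon> (1 / ((real i + 1) * real \<nu>))" for i :: nat
    have \<eta>pos: "\<eta> i > 0" for i using that nu1 by (simp add: \<eta>_def)
    define good where "good i n \<longleftrightarrow> 1 \<le> n \<and> (\<forall>a c. n - 1 \<le> a \<longrightarrow> a \<le> n + \<nu> \<longrightarrow> n - 1 \<le> c \<longrightarrow> c \<le> n + \<nu>
        \<longrightarrow> d (x a) (x c) \<le> \<eta> i)" for i n
    have "\<exists>N. \<forall>n\<ge>N. good i n" for i
    proof -
      obtain N where N: "\<forall>n\<ge>N. \<forall>a c. n \<le> a \<longrightarrow> a \<le> n + (\<nu>+1) \<longrightarrow> n \<le> c \<longrightarrow> c \<le> n + (\<nu>+1)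
          \<longrightarrow> d (x a) (x c) \<le> \<eta> i"
        using Wd[OF \<eta>pos[of i], of "\<nu>+1"] by blast
      have "good i n" if "n \<ge> N + 1" for n
        unfolding good_def using that N[rule_format, of "n-1"] by auto
      thus ?thesis by blast
    qed
    then obtain G where G: "\<And>i n. n \<ge> G i \<Longrightarrow> good i n" by metis
    obtain pk where pk: "\<And>L. pk L \<ge> L \<and> (\<exists>m>pk L. \<epsilon> < d (x (pk L)) (x m))"
      using H by metis
    define mf where "mf n = (LEAST m. n < m \<and> \<epsilon> < d (x n) (x m))" for n
    have props: "n + \<nu> < mf n \<and> \<epsilon> < d (x n) (x (mf n)) \<and>
        d (x (n - 1)) (x (mf n - 1)) \<le> \<epsilon> + 1 / (real i + 1)"
      if gd: "good i n" and ex: "\<exists>m>n. \<epsilon> < d (x n) (x m)" for i n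
    proof -
      have M1: "n < mf n \<and> \<epsilon> < d (x n) (x (mf n))"
        unfolding mf_def using ex by (rule LeastI_ex)
      have n1: "1 \<le> n" using gd by (simp add: good_def)
      have M2: "n + \<nu> < mf n"
      proof (rule ccontr)
        assume "\<not> n + \<nu> < mf n"
        hence "d (x n) (x (mf n)) \<le> \<eta> i" using gd M1 unfolding good_def by auto
        also have "\<eta> i \<le> \<epsilon>" by (simp add: \<eta>_def)
        finally show False using M1 by simp
      qed
      have M3: "d (x n) (x (mf n - 1)) \<le> \<epsilon>"
      proof -
        have "mf n - 1 < mf n" using M1 by simp
        hence "\<not> (n < mf n - 1 \<and> \<epsilon> < d (x n) (x (mf n - 1)))"
          unfolding mf_def by (rule not_less_Least)
        moreover have "n < mf n - 1" using M2 nu1 by simp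
        ultimately show ?thesis by simp
      qed
      let ?A = "[n+1..<n+\<nu>]"
      let ?b = "mf n - 1"
      have dist: "distinct ((n-1) # (?A @ [n]) @ [?b])" using n1 M2 nu1 by auto
      have len: "length (?A @ [n]) = \<nu>" using nu1 by simp
      have "d (x (n-1)) (x ?b) \<le> path_len d (x (n-1)) (map x (?A @ [n])) (x ?b)"
        by (rule gm_ineq[OF gm xX inj dist len])
      also have "\<dots> = path_len d (x (n-1)) (map x ?A) (x n) + d (x n) (x ?b)"
        by (simp add: path_len_snoc)
      also have "path_len d (x (n-1)) (map x ?A) (x n) \<le> (real (length (map x ?A)) + 1) * \<eta> i"
      proof (rule path_len_bound)
        have "successively (\<lambda>a c. d (x a) (x c) \<le> \<eta> i) ((n-1) # ?A @ [n])"
          by (rule successively_all) (use gd in \<open>auto simp: good_def\<close>)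
        thus "successively (\<lambda>u v. d u v \<le> \<eta> i) (x (n-1) # map x ?A @ [x n])"
          using successively_map[of "\<lambda>u v. d u v \<le> \<eta> i" x "(n-1) # ?A @ [n]"] by simp
      qed
      also have "(real (length (map x ?A)) + 1) * \<eta> i \<le> real \<nu> * (1 / ((real i + 1) * real \<nu>))"
      proof -
        have "real (length (map x ?A)) + 1 = real \<nu>" using nu1 by (simp add: of_nat_diff)
        moreover have "\<eta> i \<le> 1 / ((real i + 1) * real \<nu>)" by (simp add: \<eta>_def)
        ultimately show ?thesis by (metis mult_left_mono of_nat_0_le_iff)
      qed
      also have "real \<nu> * (1 / ((real i + 1) * real \<nu>)) = 1 / (real i + 1)" using nu1 by simp
      finally show ?thesis using M1 M2 M3 by simp
    qed
    define s where "s = rec_nat (pk (G 0 + 1)) (\<lambda>i prev. pk (max (G (Suc i)) (mf prev + 1)))"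
    have s0: "s 0 = pk (G 0 + 1)" and sS: "\<And>i. s (Suc i) = pk (max (G (Suc i)) (mf (s i) + 1))"
      by (simp_all add: s_def)
    have sgood: "good i (s i) \<and> (\<exists>m>s i. \<epsilon> < d (x (s i)) (x m))" for i
    proof (cases i)
      case 0 thus ?thesis using pk[of "G 0 + 1"] G[of 0 "s 0"] s0 by auto
    next
      case (Suc j) thus ?thesis using pk[of "max (G (Suc j)) (mf (s j) + 1)"] G[of "Suc j" "s (Suc j)"] sS[of j] by auto
    qed
    have sg1: "s (Suc i) \<ge> mf (s i) + 1" for i using pk sS[of i] by (metis max.bounded_iff)
    define P where "P i = s i - 1" for i
    define Q where "Q i = mf (s i) - 1" for i
    have s1: "1 \<le> s i" for i using sgood[of i] by (simp add: good_def)
    have pr: "s i + \<nu> < mf (s i) \<and> \<epsilon> < d (x (s i)) (x (mf (s i))) \<and>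
        d (x (s i - 1)) (x (mf (s i) - 1)) \<le> \<epsilon> + 1 / (real i + 1)" for i
      using props sgood[of i] by blast
    have smP: "strict_mono P" unfolding strict_mono_Suc_iff P_def
    proof
      fix i show "s i - 1 < s (Suc i) - 1" using sg1[of i] conjunct1[OF pr[of i]] s1[of i] by linarith
    qed
    have smQ: "strict_mono Q" unfolding strict_mono_Suc_iff Q_def
    proof
      fix i show "mf (s i) - 1 < mf (s (Suc i)) - 1" using sg1[of i] conjunct1[OF pr[of "Suc i"]] by linarith
    qed
    have "limsup (\<lambda>i. ereal (d (x (P i)) (x (Q i)))) \<le> limsup (\<lambda>i. ereal (\<epsilon> + inverse (real (Suc i))))"
      by (rule Limsup_mono) (use pr in \<open>auto simp: P_def Q_def divide_inverse add.commute\<close>)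
    also have "limsup (\<lambda>i. ereal (\<epsilon> + inverse (real (Suc i)))) = ereal \<epsilon>"
    proof (rule lim_imp_Limsup)
      show "(\<lambda>i. ereal (\<epsilon> + inverse (real (Suc i)))) \<longlonglongrightarrow> ereal \<epsilon>"
        using tendsto_add[OF tendsto_const LIMSEQ_inverse_real_of_nat, of \<epsilon>] by (simp add: tendsto_ereal)
    qed simp
    finally obtain N where "\<forall>i\<ge>N. d (x (P i + 1)) (x (Q i + 1)) \<le> \<epsilon>"
      using hyp[OF \<open>\<epsilon> > 0\<close> smP smQ] by blast
    hence "d (x (P N + 1)) (x (Q N + 1)) \<le> \<epsilon>" by simp
    moreover have "P N + 1 = s N" "Q N + 1 = mf (s N)" using s1[of N] pr[of N] by (auto simp: P_def Q_def)
    ultimately show False using pr[of N] by simp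
  qed
  show ?thesis
    unfolding gm_cauchy_def k_cauchy_def
  proof (rule order_tendstoI)
    fix a :: ereal assume "a < 0"
    show "eventually (\<lambda>n. a < (SUP m. ereal (d (x n) (x (n + 1 + m * 1))))) sequentially"
    proof (rule always_eventually, rule allI)
      fix n
      have "a < ereal (d (x n) (x (n + 1 + 0 * 1)))" using \<open>a < 0\<close> pos[of n] by (simp add: less_le_trans[of a 0])
      thus "a < (SUP m. ereal (d (x n) (x (n + 1 + m * 1))))" unfolding less_SUP_iff by (rule bexI[where x=0]) simp_all
    qed
  next
    fix a :: ereal assume "0 < a"
    then obtain e where e: "0 < ereal e" "ereal e < a" using ereal_dense2 by blast
    have e0: "e / 2 > 0" using e(1) by simp
    show "eventually (\<lambda>n. (SUP m. ereal (d (x n) (x (n + 1 + m * 1)))) < a) sequentially"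
      using key[OF e0]
    proof (rule eventually_mono)
      fix n assume "\<forall>m>n. d (x n) (x m) \<le> e / 2"
      hence "(SUP m. ereal (d (x n) (x (n + 1 + m * 1)))) \<le> ereal (e / 2)"
        by (intro SUP_least) auto
      also have "ereal (e/2) < ereal e" using e(1) by simp
      finally show "(SUP m. ereal (d (x n) (x (n + 1 + m * 1)))) < a" using e(2) by simp
    qed
  qed
qed

end
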